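(* Let $t$ be a positive integer and let $G$ be a minimal counterexample to the following conjecture: every graph on $4t-1$ vertices with independence number $2$ satisfies $\mathrm{cm}(G)\ge t$. That is, $G$ has $4t-1$ vertices, $\alpha(G)=2$ and $\mathrm{cm}(G)\le t-1$, and the conjecture holds for every positive integer $t'<t$. Then $G$ contains no dominating matching.
   Context: All graphs are finite and simple. $\alpha(G)$ is the independence number. A matching $M$ in $G$ is connected if for every two edges of $M$ there is an edge of $G$ joining an endpoint of one to an endpoint of the other; $\mathrm{cm}(G)$ is the maximum size of a connected matching in $G$. A connected matching $M$ of $G$ is dominating if every edge of $M$ is adjacent to every vertex of $V(G)\setminus V(M)$, i.e. every vertex outside $V(M)$ is adjacent to at least one endpoint of each edge of $M$. *)

theory Defs
  imports Main
begin

definition graph :: "'a set \<Rightarrow> ('a \<Rightarrow> 'a \<Rightarrow> bool) \<Rightarrow> bool" where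
  "graph V E \<longleftrightarrow> finite V \<and> (\<forall>x y. E x y \<longrightarrow> x \<in> V \<and> y \<in> V)
     \<and> (\<forall>x y. E x y \<longrightarrow> E y x) \<and> (\<forall>x. \<not> E x x)"

definition independent_set :: "'a set \<Rightarrow> ('a \<Rightarrow> 'a \<Rightarrow> bool) \<Rightarrow> 'a set \<Rightarrow> bool" where
  "independent_set V E S \<longleftrightarrow> S \<subseteq> V \<and> (\<forall>x\<in>S. \<forall>y\<in>S. \<not> E x y)"

definition alpha :: "'a set \<Rightarrow> ('a \<Rightarrow> 'a \<Rightarrow> bool) \<Rightarrow> nat" where
  "alpha V E = Max {card S | S. independent_set V E S}"

definition matching :: "'a set \<Rightarrow> ('a \<Rightarrow> 'a \<Rightarrow> bool) \<Rightarrow> 'a set set \<Rightarrow> bool" where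
  "matching V E M \<longleftrightarrow> (\<forall>e\<in>M. \<exists>u v. e = {u, v} \<and> E u v)
     \<and> (\<forall>e\<in>M. \<forall>f\<in>M. e \<noteq> f \<longrightarrow> e \<inter> f = {})"

definition connected_matching :: "'a set \<Rightarrow> ('a \<Rightarrow> 'a \<Rightarrow> bool) \<Rightarrow> 'a set set \<Rightarrow> bool" where
  "connected_matching V E M \<longleftrightarrow> matching V E M
     \<and> (\<forall>e\<in>M. \<forall>f\<in>M. e \<noteq> f \<longrightarrow> (\<exists>u\<in>e. \<exists>v\<in>f. E u v))"

definition cm :: "'a set \<Rightarrow> ('a \<Rightarrow> 'a \<Rightarrow> bool) \<Rightarrow> nat" where
  "cm V E = Max {card M | M. connected_matching V E M}"

definition dominating_matching :: "'a set \<Rightarrow> ('a \<Rightarrow> 'a \<Rightarrow> bool) \<Rightarrow> 'a set set \<Rightarrow> bool" where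
  "dominating_matching V E M \<longleftrightarrow> connected_matching V E M
     \<and> (\<forall>e\<in>M. \<forall>x\<in>V - \<Union>M. \<exists>u\<in>e. E x u)"

end

theory Submission
  imports Defs
begin

lemma cm_subset_Pow:
  assumes "graph V E" "connected_matching V E M"
  shows "M \<subseteq> Pow V"
proof
  fix e assume "e \<in> M"
  then have "\<exists>u v. e = {u, v} \<and> E u v"
    using assms(2) unfolding connected_matching_def matching_def by simp
  then obtain u v where "e = {u, v}" "E u v" by metis
  moreover have "u \<in> V" "v \<in> V" using assms(1) \<open>E u v\<close> unfolding graph_def by auto
  ultimately show "e \<in> Pow V" by simp
qed

lemma cm_set_finite:
  assumes "graph V E"
  shows "finite {card M | M. connected_matching V E M}"
proof -
  have fV: "finite V" using assms by (simp add: graph_def)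
  have "{card M | M. connected_matching V E M} \<subseteq> {..card (Pow V)}"
  proof
    fix n assume "n \<in> {card M | M. connected_matching V E M}"
    then obtain M where "connected_matching V E M" "n = card M" by blast
    then show "n \<in> {..card (Pow V)}"
      using cm_subset_Pow[OF assms] fV by (simp add: card_mono)
  qed
  then show ?thesis using finite_subset by blast
qed

lemma cm_le:
  assumes "graph V E" "connected_matching V E M"
  shows "card M \<le> cm V E"
  unfolding cm_def using cm_set_finite[OF assms(1)] assms(2)
  by (intro Max_ge) auto

lemma cm_witness:
  assumes "graph V E"
  shows "\<exists>M. connected_matching V E M \<and> card M = cm V E"
proof -
  have "connected_matching V E {}" by (simp add: connected_matching_def matching_def)
  then have "cm V E \<in> {card M | M. connected_matching V E M}"
    unfolding cm_def using cm_set_finite[OF assms] by (intro Max_in) auto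
  then show ?thesis by auto
qed

lemma clique_matching:
  assumes "finite S" "2 * k \<le> card S" "\<forall>x\<in>S. \<forall>y\<in>S. x \<noteq> y \<longrightarrow> E x y"
  shows "\<exists>M. connected_matching V E M \<and> card M = k \<and> \<Union>M \<subseteq> S"
  using assms
proof (induction k arbitrary: S)
  case 0
  then show ?case by (intro exI[of _ "{}"]) (simp add: connected_matching_def matching_def)
next
  case (Suc k)
  then have "card S \<ge> 2" by simp
  then obtain T where T: "T \<subseteq> S" "card T = 2" by (meson obtain_subset_with_card_n)
  then obtain a b where ab: "T = {a, b}" "a \<noteq> b" by (meson card_2_iff)
  have S': "2 * k \<le> card (S - {a, b})" using Suc.prems T ab
    by (simp add: card_Diff_subset)
  obtain M where M: "connected_matching V E M" "card M = k" "\<Union>M \<subseteq> S - {a,b}"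
    using Suc.IH[OF _ S'] Suc.prems by auto
  have fM: "finite M"
  proof -
    have "M \<subseteq> Pow S" using M(3) by blast
    then show ?thesis using Suc.prems(1) finite_subset by blast
  qed
  have nin: "{a,b} \<notin> M" using M(3) by blast
  have Eab: "E a b" using Suc.prems(3) T ab by auto
  have disj: "\<forall>f\<in>M. {a,b} \<inter> f = {}" using M(3) by blast
  have Mm: "\<forall>e\<in>M. \<exists>u v. e = {u, v} \<and> E u v"
    and Md: "\<forall>e\<in>M. \<forall>f\<in>M. e \<noteq> f \<longrightarrow> e \<inter> f = {}"
    and Mc: "\<forall>e\<in>M. \<forall>f\<in>M. e \<noteq> f \<longrightarrow> (\<exists>u\<in>e. \<exists>v\<in>f. E u v)"
    using M(1) unfolding connected_matching_def matching_def by auto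
  have ne: "\<forall>g\<in>M. \<exists>u. u \<in> g"
    using Mm by blast
  have subM: "\<forall>g\<in>M. g \<subseteq> S - {a,b}" using M(3) by blast
  have cross: "\<exists>u\<in>e. \<exists>v\<in>f. E u v" if h1: "e = {a,b}" and h2: "f \<in> M" for e f
  proof -
    obtain v where v: "v \<in> f" using ne h2 by blast
    then have "v \<in> S" "v \<noteq> a" using subM h2 by auto
    then have "E a v" using Suc.prems(3) T ab by auto
    then show ?thesis using v h1 by blast
  qed
  have "connected_matching V E (insert {a,b} M)"
    unfolding connected_matching_def matching_def
  proof (intro conjI ballI impI)
    fix e assume "e \<in> insert {a,b} M"
    then consider "e = {a,b}" | "e \<in> M" by blast
    then show "\<exists>u v. e = {u, v} \<and> E u v"
    proof cases
      case 1 then show ?thesis using Eab by blast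
    next
      case 2 then show ?thesis using Mm by blast
    qed
  next
    fix e f assume ef: "e \<in> insert {a,b} M" "f \<in> insert {a,b} M" "e \<noteq> f"
    show "e \<inter> f = {}"
    proof (cases "e = {a,b}")
      case True
      then have "f \<in> M" using ef by blast
      then show ?thesis using disj True by blast
    next
      case False
      then have eM: "e \<in> M" using ef by blast
      show ?thesis
      proof (cases "f = {a,b}")
        case True
        then show ?thesis using disj eM by blast
      next
        case False
        then have "f \<in> M" using ef by blast
        then show ?thesis using Md eM ef(3) by blast
      qed
    qed
  next
    fix e f assume ef: "e \<in> insert {a,b} M" "f \<in> insert {a,b} M" "e \<noteq> f"
    show "\<exists>u\<in>e. \<exists>v\<in>f. E u v"
    proof (cases "e = {a,b}")
      case True
      then have "f \<in> M" using ef by auto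
      then show ?thesis using cross True by blast
    next
      case False
      then have eM: "e \<in> M" using ef by auto
      show ?thesis
      proof (cases "f = {a,b}")
        case True
        obtain u where u: "u \<in> e" using ne eM by blast
        then have "u \<in> S" "u \<noteq> a" using subM eM by auto
        then have "E u a" using Suc.prems(3) T ab by auto
        then show ?thesis using u True by blast
      next
        case False
        then have "f \<in> M" using ef by auto
        then show ?thesis using Mc eM ef(3) by blast
      qed
    qed
  qed
  moreover have "card (insert {a,b} M) = Suc k" using fM nin M(2) by simp
  moreover have "\<Union>(insert {a,b} M) \<subseteq> S" using M(3) T ab by blast
  ultimately show ?case by blast
qed


lemma restrict_graph:
  assumes "graph V E" "V' \<subseteq> V"
  shows "graph V' (\<lambda>x y. E x y \<and> x \<in> V' \<and> y \<in> V')"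
  using assms unfolding graph_def by (auto intro: finite_subset)

lemma restrict_cm:
  assumes "connected_matching V' (\<lambda>x y. E x y \<and> x \<in> V' \<and> y \<in> V') M"
  shows "connected_matching V E M \<and> \<Union>M \<subseteq> V'"
proof -
  have m1: "\<forall>e\<in>M. \<exists>u v. e = {u, v} \<and> E u v \<and> u \<in> V' \<and> v \<in> V'"
    using assms unfolding connected_matching_def matching_def by simp
  have "\<forall>e\<in>M. \<exists>u v. e = {u, v} \<and> E u v"
  proof
    fix e assume "e \<in> M"
    then obtain u v where "e = {u, v}" "E u v" using m1 by metis
    then show "\<exists>u v. e = {u, v} \<and> E u v" by metis
  qed
  moreover have "\<Union>M \<subseteq> V'"
  proof
    fix x assume "x \<in> \<Union>M"
    then obtain e where "e \<in> M" "x \<in> e" by auto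
    then obtain u v where "e = {u, v}" "u \<in> V'" "v \<in> V'" using m1 by metis
    then show "x \<in> V'" using \<open>x \<in> e\<close> by auto
  qed
  moreover have "\<forall>e\<in>M. \<forall>f\<in>M. e \<noteq> f \<longrightarrow> e \<inter> f = {}"
    using assms unfolding connected_matching_def matching_def by simp
  moreover have "\<forall>e\<in>M. \<forall>f\<in>M. e \<noteq> f \<longrightarrow> (\<exists>u\<in>e. \<exists>v\<in>f. E u v)"
  proof (intro ballI impI)
    fix e f assume "e \<in> M" "f \<in> M" "e \<noteq> f"
    then have "\<exists>u\<in>e. \<exists>v\<in>f. E u v \<and> u \<in> V' \<and> v \<in> V'"
      using assms unfolding connected_matching_def by simp
    then show "\<exists>u\<in>e. \<exists>v\<in>f. E u v" by meson
  qed
  ultimately show ?thesis unfolding connected_matching_def matching_def by simp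
qed

lemma indep_set_finite:
  assumes "finite V"
  shows "finite {card S | S. independent_set V E S}"
proof -
  have "{card S | S. independent_set V E S} \<subseteq> {..card V}"
  proof
    fix n assume "n \<in> {card S | S. independent_set V E S}"
    then obtain S where "independent_set V E S" "n = card S" by blast
    then show "n \<in> {..card V}"
      using assms by (simp add: independent_set_def card_mono)
  qed
  then show ?thesis using finite_subset by blast
qed

lemma alpha_restrict:
  assumes "graph V E" "alpha V E = 2" "V' \<subseteq> V" "x \<in> V'" "y \<in> V'" "x \<noteq> y" "\<not> E x y"
  shows "alpha V' (\<lambda>x y. E x y \<and> x \<in> V' \<and> y \<in> V') = 2"
proof -
  let ?E = "\<lambda>x y. E x y \<and> x \<in> V' \<and> y \<in> V'"
  have fV: "finite V" using assms(1) by (simp add: graph_def)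
  have fV': "finite V'" using fV assms(3) finite_subset by blast
  have irr: "\<forall>x. \<not> E x x" using assms(1) by (simp add: graph_def)
  have sym: "E y x \<Longrightarrow> E x y" for x y using assms(1) by (simp add: graph_def)
  have ind: "independent_set V' ?E {x, y}"
    unfolding independent_set_def
  proof (intro conjI ballI)
    show "{x, y} \<subseteq> V'" using assms by simp
  next
    fix a b assume "a \<in> {x, y}" "b \<in> {x, y}"
    then show "\<not> ?E a b" using assms(7) irr sym by auto
  qed
  have le: "card S \<le> 2" if "independent_set V' ?E S" for S
  proof -
    have "independent_set V E S" using that assms(3) unfolding independent_set_def by blast
    then have "card S \<le> alpha V E"
      unfolding alpha_def using indep_set_finite[OF fV] by (intro Max_ge) auto
    then show ?thesis using assms(2) by simp
  qed
  have "alpha V' ?E \<ge> 2"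
  proof -
    have "card {x, y} \<le> alpha V' ?E"
      unfolding alpha_def using indep_set_finite[OF fV'] ind by (intro Max_ge) auto
    then show ?thesis using assms(6) by simp
  qed
  moreover have "alpha V' ?E \<le> 2"
    unfolding alpha_def using indep_set_finite[OF fV'] ind le
    by (subst Max_le_iff) auto
  ultimately show ?thesis by simp
qed

lemma combine:
  assumes g: "graph V E" and dm: "dominating_matching V E M"
    and cm': "connected_matching V E M'" and sub: "\<Union>M' \<subseteq> V - \<Union>M"
  shows "card M + card M' \<le> cm V E"
proof -
  have cmM: "connected_matching V E M" using dm by (simp add: dominating_matching_def)
  have dom: "\<forall>e\<in>M. \<forall>x\<in>V - \<Union>M. \<exists>u\<in>e. E x u" using dm by (simp add: dominating_matching_def)
  have sym: "E x y \<Longrightarrow> E y x" for x y using g by (simp add: graph_def)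
  have fV: "finite V" using g by (simp add: graph_def)
  have fM: "finite M" using finite_subset[OF cm_subset_Pow[OF g cmM]] fV by simp
  have fM': "finite M'" using finite_subset[OF cm_subset_Pow[OF g cm']] fV by simp
  have Mm: "\<forall>e\<in>M. \<exists>u v. e = {u, v} \<and> E u v"
    and Md: "\<forall>e\<in>M. \<forall>f\<in>M. e \<noteq> f \<longrightarrow> e \<inter> f = {}"
    and Mc: "\<forall>e\<in>M. \<forall>f\<in>M. e \<noteq> f \<longrightarrow> (\<exists>u\<in>e. \<exists>v\<in>f. E u v)"
    using cmM unfolding connected_matching_def matching_def by auto
  have Mm': "\<forall>e\<in>M'. \<exists>u v. e = {u, v} \<and> E u v"
    and Md': "\<forall>e\<in>M'. \<forall>f\<in>M'. e \<noteq> f \<longrightarrow> e \<inter> f = {}"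
    and Mc': "\<forall>e\<in>M'. \<forall>f\<in>M'. e \<noteq> f \<longrightarrow> (\<exists>u\<in>e. \<exists>v\<in>f. E u v)"
    using cm' unfolding connected_matching_def matching_def by auto
  have ne': "\<exists>x. x \<in> f" if h: "f \<in> M'" for f
  proof -
    obtain u v where "f = {u, v}" using Mm' h by metis
    then show ?thesis by auto
  qed
  have disj: "e \<inter> f = {}" if "e \<in> M" "f \<in> M'" for e f
    using that sub by auto
  have cross: "\<exists>u\<in>e. \<exists>v\<in>f. E u v" if h1: "e \<in> M" and h2: "f \<in> M'" for e f
  proof -
    obtain x where x: "x \<in> f" using ne' h2 by blast
    then have "x \<in> V - \<Union>M" using sub h2 by auto
    then obtain u where "u \<in> e" "E x u" using dom h1 by blast
    then show ?thesis using x sym by blast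
  qed
  have MM: "M \<inter> M' = {}"
  proof (rule ccontr)
    assume "M \<inter> M' \<noteq> {}"
    then obtain f where "f \<in> M" "f \<in> M'" by auto
    then show False using disj ne' by blast
  qed
  have "connected_matching V E (M \<union> M')"
    unfolding connected_matching_def matching_def
  proof (intro conjI ballI impI)
    fix e assume "e \<in> M \<union> M'"
    then show "\<exists>u v. e = {u, v} \<and> E u v" using Mm Mm' by (metis Un_iff)
  next
    fix e f assume ef: "e \<in> M \<union> M'" "f \<in> M \<union> M'" "e \<noteq> f"
    show "e \<inter> f = {}"
    proof (cases "e \<in> M")
      case True
      then show ?thesis
      proof (cases "f \<in> M")
        case True then show ?thesis using Md \<open>e \<in> M\<close> ef(3) by blast
      next
        case False then have "f \<in> M'" using ef by blast
        then show ?thesis using disj \<open>e \<in> M\<close> by blast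
      qed
    next
      case False
      then have eM: "e \<in> M'" using ef by blast
      show ?thesis
      proof (cases "f \<in> M")
        case True then show ?thesis using disj eM by blast
      next
        case False then have "f \<in> M'" using ef by blast
        then show ?thesis using Md' eM ef(3) by blast
      qed
    qed
  next
    fix e f assume ef: "e \<in> M \<union> M'" "f \<in> M \<union> M'" "e \<noteq> f"
    show "\<exists>u\<in>e. \<exists>v\<in>f. E u v"
    proof (cases "e \<in> M")
      case True
      then show ?thesis
      proof (cases "f \<in> M")
        case True then show ?thesis using Mc \<open>e \<in> M\<close> ef(3) by blast
      next
        case False then have "f \<in> M'" using ef by blast
        then show ?thesis using cross \<open>e \<in> M\<close> by blast
      qed
    next
      case False
      then have eM: "e \<in> M'" using ef by blast
      show ?thesis
      proof (cases "f \<in> M")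
        case True
        then obtain u v where "u \<in> f" "v \<in> e" "E u v" using cross eM by blast
        then show ?thesis using sym by blast
      next
        case False then have "f \<in> M'" using ef by blast
        then show ?thesis using Mc' eM ef(3) by blast
      qed
    qed
  qed
  then have "card (M \<union> M') \<le> cm V E" using cm_le[OF g] by blast
  moreover have "card (M \<union> M') = card M + card M'" using card_Un_disjoint[OF fM fM' MM] .
  ultimately show ?thesis by simp
qed


lemma card_Union_le:
  assumes "\<forall>e\<in>M. \<exists>u v. e = {u, v} \<and> E u v" "finite M"
  shows "card (\<Union>M) \<le> 2 * card M"
proof -
  have "card (\<Union>M) \<le> sum card M" by (rule card_Union_le_sum_card)
  also have "\<dots> \<le> sum (\<lambda>_. 2) M"
  proof (rule sum_mono)
    fix e assume "e \<in> M"
    then obtain u v where "e = {u, v}" using assms(1) by metis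
    then show "card e \<le> 2" by (simp add: card_insert_if)
  qed
  also have "\<dots> = 2 * card M" by simp
  finally show ?thesis .
qed

theorem lemma2p7:
  fixes V :: "'a set" and E :: "'a \<Rightarrow> 'a \<Rightarrow> bool" and t :: nat
  assumes "t > 0"
    and "graph V E"
    and "card V = 4 * t - 1"
    and "alpha V E = 2"
    and "cm V E \<le> t - 1"
    and "\<forall>t'::nat. 0 < t' \<and> t' < t \<longrightarrow>
           (\<forall>(V'::'a set) E'. graph V' E' \<and> card V' = 4 * t' - 1 \<and> alpha V' E' = 2
              \<longrightarrow> cm V' E' \<ge> t')"
  shows "\<not> (\<exists>M. M \<noteq> {} \<and> dominating_matching V E M)"
proof
  assume "\<exists>M. M \<noteq> {} \<and> dominating_matching V E M"
  then obtain M where Mne: "M \<noteq> {}" and dm: "dominating_matching V E M" by blast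
  have g: "graph V E" by fact
  have cmM: "connected_matching V E M" using dm by (simp add: dominating_matching_def)
  have fV: "finite V" using g by (simp add: graph_def)
  have MP: "M \<subseteq> Pow V" using cm_subset_Pow[OF g cmM] .
  have fM: "finite M" using finite_subset[OF MP] fV by simp
  define m where "m = card M"
  have m1: "m \<ge> 1" using Mne fM m_def by (simp add: Suc_leI card_gt_0_iff)
  have mt: "m \<le> t - 1" using cm_le[OF g cmM] assms(5) m_def by simp
  define t' where "t' = t - m"
  have t'pos: "0 < t'" "t' < t" using m1 mt assms(1) t'_def by auto
  define W where "W = V - \<Union>M"
  have UV: "\<Union>M \<subseteq> V" using MP by blast
  have Mm: "\<forall>e\<in>M. \<exists>u v. e = {u, v} \<and> E u v"
    using cmM unfolding connected_matching_def matching_def by simp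
  have cU: "card (\<Union>M) \<le> 2 * m" using card_Union_le[OF Mm fM] m_def by simp
  have cW: "card W = card V - card (\<Union>M)" unfolding W_def
    using card_Diff_subset[OF finite_subset[OF UV fV] UV] .
  have cW2: "card W \<ge> 4 * t' - 1" "card W \<ge> 2 * t'"
    using cW cU assms(3) t'_def mt m1 assms(1) by auto
  have fW: "finite W" using fV W_def by simp
  have WV: "W \<subseteq> V" using W_def by blast
  have "\<exists>M'. connected_matching V E M' \<and> \<Union>M' \<subseteq> W \<and> card M' \<ge> t'"
  proof (cases "\<exists>x\<in>W. \<exists>y\<in>W. x \<noteq> y \<and> \<not> E x y")
    case True
    then obtain x y where xy: "x \<in> W" "y \<in> W" "x \<noteq> y" "\<not> E x y" by blast
    have "4 * t' - 1 - 2 \<le> card (W - {x, y})"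
      using cW2(1) xy fW by (simp add: card_Diff_subset)
    then obtain T where T: "T \<subseteq> W - {x, y}" "card T = 4 * t' - 1 - 2" "finite T"
      by (meson obtain_subset_with_card_n)
    define V' where "V' = insert x (insert y T)"
    have V'W: "V' \<subseteq> W" using T xy V'_def by blast
    have "x \<notin> T" "y \<notin> T" using T(1) by auto
    then have "card V' = Suc (Suc (card T))" using T(3) xy(3) V'_def by simp
    then have cV': "card V' = 4 * t' - 1" using T(2) t'pos by simp
    let ?E = "\<lambda>a b. E a b \<and> a \<in> V' \<and> b \<in> V'"
    have gV': "graph V' ?E" using restrict_graph[OF g] V'W WV by blast
    have aV': "alpha V' ?E = 2"
      using alpha_restrict[OF g assms(4)] V'W WV xy V'_def by blast
    have "cm V' ?E \<ge> t'" using assms(6) t'pos gV' cV' aV' by blast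
    moreover obtain M' where M': "connected_matching V' ?E M'" "card M' = cm V' ?E"
      using cm_witness[OF gV'] by blast
    moreover have "connected_matching V E M' \<and> \<Union>M' \<subseteq> V'" using restrict_cm[OF M'(1)] .
    ultimately show ?thesis using V'W M'(2) by (intro exI[of _ M']) auto
  next
    case False
    then have "\<forall>x\<in>W. \<forall>y\<in>W. x \<noteq> y \<longrightarrow> E x y" by blast
    from clique_matching[OF fW cW2(2) this] show ?thesis by auto
  qed
  then obtain M' where M': "connected_matching V E M'" "\<Union>M' \<subseteq> W" "card M' \<ge> t'" by blast
  have "card M + card M' \<le> cm V E" using combine[OF g dm M'(1)] M'(2) W_def by blast
  then show False using M'(3) t'_def m_def mt assms(1) assms(5) by linarith
qed

end
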